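(* Consider an agent with $b$ neighbors in the networked adversarial $K$-armed bandit setting described in the context, whose neighbors play arbitrarily subject to $q^i_j(t)\ge \varepsilon_i/K$ for all neighbors $i$, arms $j$ and times $t$, where $\varepsilon_i\in(0,1]$. Let $$\Theta=\prod_{i=1}^b\left(1-\frac{\varepsilon_i}{K}\right),\qquad \beta=\frac{1}{1-\left(1-\frac1K\right)\Theta}+1.$$ Then for an appropriate choice of the parameters $\eta\in[0,1]$ and $\delta>0$ (depending on $\Theta$, as well as $K$ and $T$), the regret of the agent using the fixed-parameter $\mathrm{EXPN}$ algorithm satisfies $R\in O\left(\sqrt{\beta T\ln K}\right)$.
   Context: Adversarial networked bandit setting: there are $K$ arms and a horizon $T$. At each time $t$ an adversary fixes a reward vector $g(t)\in[0,1]^K$, the same for all agents. The agent has $b$ neighbors; at time $t$ neighbor $i$ selects an arm drawn from a probability distribution $q^i(t)=(q^i_1(t),\dots,q^i_K(t))$ chosen arbitrarily, each agent drawing independently. The agent selects arm $a(t)$ drawn from her distribution $p(t)$, and observes her own reward, the actions and rewards of her neighbors, and their distributions. Define $p'_j(t)=1-(1-p_j(t))\prod_{i=1}^b(1-q^i_j(t))$ and the estimator $\hat g_j(t)=g_j(t)/p'_j(t)$ if some individual among the agent and her neighbors selects arm $j$ at time $t$, and $0$ otherwise. Fixed-parameter $\mathrm{EXPN}$ with exploration parameter $\eta\in[0,1]$ and update parameter $\delta>0$: weights $w_j(1)=1$, $w_j(t+1)=w_j(t)e^{\delta\hat g_j(t)}$, $W_t=\sum_j w_j(t)$, and $p_j(t)=(1-\eta)\frac{w_j(t)}{W_t}+\frac{\eta}{K}$.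 Regret: $R=\mathbb E\left[\sum_t g_{j^\star}(t)-\sum_t g_{a(t)}(t)\right]$ with $j^\star=\arg\max_j\mathbb E[\sum_t g_j(t)]$, expectation over the randomness of the algorithms. *)

theory Defs
  imports Complex_Main
begin

text \<open>Arms are 0..K-1, neighbours are 0..b-1, rounds are 0-indexed.
A round records the agent's arm and the list (length b) of the neighbours' arms.
A history is a list of rounds, MOST RECENT ROUND FIRST; its length is the
current time. The adversary's reward vector g h and the neighbours'
distributions q h i may depend arbitrarily on the history h.\<close>

type_synonym round = "nat \<times> nat list"
type_synonym hist = "round list"

definition expn_prob :: "nat \<Rightarrow> real \<Rightarrow> (nat \<Rightarrow> real) \<Rightarrow> nat \<Rightarrow> real" where
  "expn_prob K \<eta> w j = (1 - \<eta>) * w j / (\<Sum>k<K. w k) + \<eta> / real K"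

definition obs_prob :: "nat \<Rightarrow> real \<Rightarrow> (nat \<Rightarrow> real) \<Rightarrow> real" where
  "obs_prob b pj qj = 1 - (1 - pj) * (\<Prod>i<b. 1 - qj i)"

definition est_gain :: "round \<Rightarrow> nat \<Rightarrow> real \<Rightarrow> real \<Rightarrow> real" where
  "est_gain r j gj p'j = (if j = fst r \<or> j \<in> set (snd r) then gj / p'j else 0)"

primrec expn_w :: "nat \<Rightarrow> nat \<Rightarrow> real \<Rightarrow> real \<Rightarrow> (hist \<Rightarrow> nat \<Rightarrow> real)
    \<Rightarrow> (hist \<Rightarrow> nat \<Rightarrow> nat \<Rightarrow> real) \<Rightarrow> hist \<Rightarrow> nat \<Rightarrow> real" where
  "expn_w K b \<eta> \<delta> g q [] = (\<lambda>j. 1)"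
| "expn_w K b \<eta> \<delta> g q (r # h) =
     (\<lambda>j. expn_w K b \<eta> \<delta> g q h j *
          exp (\<delta> * est_gain r j (g h j)
                  (obs_prob b (expn_prob K \<eta> (expn_w K b \<eta> \<delta> g q h) j) (\<lambda>i. q h i j))))"

definition expn_p :: "nat \<Rightarrow> nat \<Rightarrow> real \<Rightarrow> real \<Rightarrow> (hist \<Rightarrow> nat \<Rightarrow> real)
    \<Rightarrow> (hist \<Rightarrow> nat \<Rightarrow> nat \<Rightarrow> real) \<Rightarrow> hist \<Rightarrow> nat \<Rightarrow> real" where
  "expn_p K b \<eta> \<delta> g q h = expn_prob K \<eta> (expn_w K b \<eta> \<delta> g q h)"

text \<open>Expectation of f over the next n rounds starting from history h, when the agent
 plays P h and neighbour i independently plays q h i.\<close>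
primrec hist_expect :: "nat \<Rightarrow> nat \<Rightarrow> (hist \<Rightarrow> nat \<Rightarrow> real) \<Rightarrow> (hist \<Rightarrow> nat \<Rightarrow> nat \<Rightarrow> real)
    \<Rightarrow> nat \<Rightarrow> (hist \<Rightarrow> real) \<Rightarrow> hist \<Rightarrow> real" where
  "hist_expect K b P q 0 f h = f h"
| "hist_expect K b P q (Suc n) f h =
     (\<Sum>a<K. \<Sum>c\<in>{c. length c = b \<and> set c \<subseteq> {..<K}}.
        (P h a * (\<Prod>i<b. q h i (c ! i))) * hist_expect K b P q n f ((a, c) # h))"

primrec arm_gain :: "(hist \<Rightarrow> nat \<Rightarrow> real) \<Rightarrow> nat \<Rightarrow> hist \<Rightarrow> real" where
  "arm_gain g j [] = 0"
| "arm_gain g j (r # h) = arm_gain g j h + g h j"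

primrec agent_gain :: "(hist \<Rightarrow> nat \<Rightarrow> real) \<Rightarrow> hist \<Rightarrow> real" where
  "agent_gain g [] = 0"
| "agent_gain g (r # h) = agent_gain g h + g h (fst r)"

definition expn_regret :: "nat \<Rightarrow> nat \<Rightarrow> real \<Rightarrow> real \<Rightarrow> (hist \<Rightarrow> nat \<Rightarrow> real)
    \<Rightarrow> (hist \<Rightarrow> nat \<Rightarrow> nat \<Rightarrow> real) \<Rightarrow> nat \<Rightarrow> real" where
  "expn_regret K b \<eta> \<delta> g q T =
     (MAX j\<in>{..<K}. hist_expect K b (expn_p K b \<eta> \<delta> g q) q T (arm_gain g j) [])
     - hist_expect K b (expn_p K b \<eta> \<delta> g q) q T (agent_gain g) []"

definition valid_env :: "nat \<Rightarrow> nat \<Rightarrow> (nat \<Rightarrow> real) \<Rightarrow> (hist \<Rightarrow> nat \<Rightarrow> real)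
    \<Rightarrow> (hist \<Rightarrow> nat \<Rightarrow> nat \<Rightarrow> real) \<Rightarrow> bool" where
  "valid_env K b \<epsilon> g q \<longleftrightarrow>
     (\<forall>h j. j < K \<longrightarrow> 0 \<le> g h j \<and> g h j \<le> 1) \<and>
     (\<forall>h i. i < b \<longrightarrow> (\<forall>j<K. \<epsilon> i / real K \<le> q h i j) \<and> (\<Sum>j<K. q h i j) = 1)"

end

theory Submission
  imports Defs
begin

definition Ls :: "nat \<Rightarrow> nat \<Rightarrow> nat list set" where
  "Ls K b = {c. length c = b \<and> set c \<subseteq> {..<K}}"

lemma finite_Ls: "finite (Ls K b)"
  using finite_lists_length_eq[of "{..<K}" b] by (simp add: Ls_def conj_commute)

lemma Ls_0: "Ls K 0 = {[]}" by (auto simp: Ls_def)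

lemma Ls_Suc: "Ls K (Suc b) = (\<lambda>(x,c). x # c) ` ({..<K} \<times> Ls K b)"
proof
  show "Ls K (Suc b) \<subseteq> (\<lambda>(x,c). x # c) ` ({..<K} \<times> Ls K b)"
  proof
    fix c assume "c \<in> Ls K (Suc b)"
    then obtain x c' where "c = x # c'" "length c' = b" "x < K" "set c' \<subseteq> {..<K}"
      by (auto simp: Ls_def length_Suc_conv)
    then show "c \<in> (\<lambda>(x,c). x # c) ` ({..<K} \<times> Ls K b)"
      by (auto simp: Ls_def image_iff)
  qed
qed (auto simp: Ls_def)

lemma sum_prod_Ls: "(\<Sum>c\<in>Ls K b. \<Prod>i<b. f i (c!i)) = (\<Prod>i<b. \<Sum>k<K. (f i k :: real))"
proof (induction b arbitrary: f)
  case 0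
  then show ?case by (simp add: Ls_0)
next
  case (Suc b)
  have inj: "inj_on (\<lambda>(x,c). x # c) ({..<K} \<times> Ls K b)" by (auto simp: inj_on_def)
  have "(\<Sum>c\<in>Ls K (Suc b). \<Prod>i<Suc b. f i (c!i))
      = (\<Sum>(x,c)\<in>{..<K} \<times> Ls K b. \<Prod>i<Suc b. f i ((x#c)!i))"
    unfolding Ls_Suc by (subst sum.reindex[OF inj]) (simp add: case_prod_unfold)
  also have "\<dots> = (\<Sum>x<K. \<Sum>c\<in>Ls K b. f 0 x * (\<Prod>i<b. f (Suc i) (c!i)))"
    by (subst sum.cartesian_product[symmetric]) (simp add: prod.lessThan_Suc_shift del: prod.lessThan_Suc)
  also have "\<dots> = (\<Sum>x<K. f 0 x) * (\<Sum>c\<in>Ls K b. (\<Prod>i<b. f (Suc i) (c!i)))"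
    by (simp only: sum_product)
  also have "\<dots> = (\<Sum>x<K. f 0 x) * (\<Prod>i<b. \<Sum>k<K. f (Suc i) k)"
    using Suc.IH[of "\<lambda>i. f (Suc i)"] by simp
  also have "\<dots> = (\<Prod>i<Suc b. \<Sum>k<K. f i k)" by (simp only: prod.lessThan_Suc_shift)
  finally show ?case .
qed

definition good :: "nat \<Rightarrow> nat \<Rightarrow> (hist \<Rightarrow> nat \<Rightarrow> real) \<Rightarrow> (hist \<Rightarrow> nat \<Rightarrow> nat \<Rightarrow> real) \<Rightarrow> bool" where
  "good K b P q \<longleftrightarrow> (\<forall>h. (\<forall>a<K. 0 \<le> P h a) \<and> (\<Sum>a<K. P h a) = 1 \<and>
      (\<forall>i<b. (\<forall>j<K. 0 \<le> q h i j) \<and> (\<Sum>j<K. q h i j) = 1))"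

lemma HE_Suc: "hist_expect K b P q (Suc n) f h =
     (\<Sum>a<K. \<Sum>c\<in>Ls K b. (P h a * (\<Prod>i<b. q h i (c ! i))) * hist_expect K b P q n f ((a, c) # h))"
  by (simp add: Ls_def)

lemma HE_one: "hist_expect K b P q 1 f h =
     (\<Sum>a<K. \<Sum>c\<in>Ls K b. (P h a * (\<Prod>i<b. q h i (c ! i))) * f ((a, c) # h))"
  by (simp add: Ls_def)

lemma HE_comp: "hist_expect K b P q (m + n) f h = hist_expect K b P q m (hist_expect K b P q n f) h"
  by (induction m arbitrary: h) (simp_all add: Ls_def)

lemma weight_nonneg:
  assumes "good K b P q" "a < K" "c \<in> Ls K b"
  shows "0 \<le> P h a * (\<Prod>i<b. q h i (c ! i))"
proof -
  have "\<forall>i<b. c ! i < K" using assms(3) nth_mem unfolding Ls_def by fastforce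
  then show ?thesis using assms(1,2) unfolding good_def
    by (intro mult_nonneg_nonneg prod_nonneg) auto
qed

lemma weight_sum:
  assumes "good K b P q"
  shows "(\<Sum>a<K. \<Sum>c\<in>Ls K b. P h a * (\<Prod>i<b. q h i (c ! i))) = 1"
proof -
  have "(\<Sum>a<K. \<Sum>c\<in>Ls K b. P h a * (\<Prod>i<b. q h i (c ! i)))
     = (\<Sum>a<K. P h a * (\<Prod>i<b. \<Sum>k<K. q h i k))"
    by (simp add: sum_distrib_left[symmetric] sum_prod_Ls)
  also have "\<dots> = 1" using assms unfolding good_def by simp
  finally show ?thesis .
qed

lemma HE_mono:
  assumes "good K b P q" "\<And>h. f h \<le> f' h"
  shows "hist_expect K b P q n f h \<le> hist_expect K b P q n f' h"
proof (induction n arbitrary: h)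
  case 0 then show ?case using assms(2) by simp
next
  case (Suc n)
  show ?case unfolding HE_Suc
    by (intro sum_mono mult_left_mono Suc.IH weight_nonneg[OF assms(1)]) auto
qed

lemma HE_add: "hist_expect K b P q n (\<lambda>h. f h + f' h) h
   = hist_expect K b P q n f h + hist_expect K b P q n f' h"
  by (induction n arbitrary: h) (simp_all add: HE_Suc distrib_left sum.distrib)

lemma HE_scale: "hist_expect K b P q n (\<lambda>h. x * f h) h = x * hist_expect K b P q n f h"
  by (induction n arbitrary: h) (simp_all add: HE_Suc sum_distrib_left ac_simps)

lemma HE_const:
  assumes "good K b P q"
  shows "hist_expect K b P q n (\<lambda>h. x) h = x"
proof (induction n arbitrary: h)
  case 0 then show ?case by simp
next
  case (Suc n)
  have "hist_expect K b P q (Suc n) (\<lambda>h. x) h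
     = (\<Sum>a<K. \<Sum>c\<in>Ls K b. P h a * (\<Prod>i<b. q h i (c ! i))) * x"
    unfolding HE_Suc Suc.IH by (simp add: sum_distrib_right)
  then show ?case using weight_sum[OF assms] by simp
qed

lemma HE_incr:
  assumes "good K b P q" "\<And>h. hist_expect K b P q 1 F h \<le> F h + x"
  shows "hist_expect K b P q n F h \<le> F h + real n * x"
proof (induction n)
  case 0 then show ?case by simp
next
  case (Suc n)
  have "hist_expect K b P q (Suc n) F h = hist_expect K b P q n (hist_expect K b P q 1 F) h"
    using HE_comp[of K b P q n 1 F h] by simp
  also have "\<dots> \<le> hist_expect K b P q n (\<lambda>h. F h + x) h"
    by (rule HE_mono[OF assms(1) assms(2)])
  also have "\<dots> = hist_expect K b P q n F h + x"
    by (simp add: HE_add HE_const[OF assms(1)])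
  also have "\<dots> \<le> F h + real (Suc n) * x" using Suc.IH by (simp add: algebra_simps)
  finally show ?case .
qed


lemma prod_ind_list: "(\<Prod>i<length c. if c!i = k then 0 else (1::real)) = (if k \<in> set c then 0 else 1)"
  by (induction c) (simp_all add: prod.lessThan_Suc_shift del: prod.lessThan_Suc)

lemma sum_if_except:
  fixes K k :: nat
  assumes k: "k < K"
  shows "(\<Sum>x<K. if x = k then 0 else (f x::real)) = sum f {..<K} - f k"
proof -
  have "(\<Sum>x<K. if x = k then 0 else (f x::real)) = 0 + (\<Sum>x\<in>{..<K} - {k}. if x = k then 0 else f x)"
    using k by (subst sum.remove[of _ k]) auto
  also have "\<dots> = (\<Sum>x\<in>{..<K} - {k}. f x)" unfolding add.left_neutral by (rule sum.cong) auto
  also have "\<dots> = sum f {..<K} - f k" using k by (subst sum.remove[of _ k, where g=f]) auto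
  finally show ?thesis .
qed

lemma sum_ind_except:
  fixes K k :: nat
  assumes "k < K"
  shows "(\<Sum>x<K. f x * (if x = k then 0 else (1::real))) = (\<Sum>x<K. f x) - f k"
proof -
  have "(\<Sum>x<K. f x * (if x = k then 0 else (1::real))) = (\<Sum>x<K. f x - (if x = k then f k else 0))"
    by (intro sum.cong) auto
  also have "\<dots> = (\<Sum>x<K. f x) - f k" using assms by (simp add: if_distrib sum_if_except cong: if_cong)
  finally show ?thesis .
qed

lemma tangent_ineq:
  fixes a t u v :: real
  assumes "0 \<le> a" "0 \<le> t" "0 < a + t * u" "0 < a + t * v"
  shows "u / (a + t * u) \<le> v / (a + t * v) + a / (a + t * v)^2 * (u - v)"
proof -
  define d where "d = a + t * u"
  define m where "m = a + t * v"
  have dp: "d > 0" and mp: "m > 0" using assms by (auto simp: d_def m_def)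
  have key: "(v * m + a * (u - v)) * d - u * m^2 = a * t * (u - v)^2"
    by (simp add: d_def m_def power2_eq_square algebra_simps)
  have "0 \<le> a * t * (u - v)^2" using assms by simp
  then have "u * m^2 \<le> (v * m + a * (u - v)) * d" using key by linarith
  then have "u / d \<le> (v * m + a * (u - v)) / m^2"
    using dp mp by (simp add: divide_simps mult.commute)
  also have "\<dots> = v / m + a / m^2 * (u - v)"
    using mp by (simp add: divide_simps power2_eq_square)
  finally show ?thesis by (simp add: d_def m_def)
qed

lemma jensen_sum:
  fixes p :: "nat \<Rightarrow> real" and \<Theta> :: real
  assumes K1: "1 \<le> K" and th: "0 \<le> \<Theta>" "\<Theta> \<le> 1"
    and pp: "\<And>k. k < K \<Longrightarrow> 0 < p k \<and> p k \<le> 1" and ps: "(\<Sum>k<K. p k) = 1"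
  shows "(\<Sum>k<K. p k / (1 - \<Theta> + \<Theta> * p k)) \<le> 1 / (1 - \<Theta> + \<Theta> * (1 / real K))"
proof -
  define a where "a = 1 - \<Theta>"
  define v where "v = 1 / real K"
  have a0: "0 \<le> a" using th by (simp add: a_def)
  have vp: "0 < v" using K1 by (simp add: v_def)
  have mp: "0 < a + \<Theta> * v" using a0 vp th by (cases "\<Theta> = 0") (auto simp: a_def intro: add_nonneg_pos)
  have "(\<Sum>k<K. p k / (a + \<Theta> * p k)) \<le> (\<Sum>k<K. v / (a + \<Theta> * v) + a / (a + \<Theta> * v)^2 * (p k - v))"
  proof (intro sum_mono tangent_ineq[OF a0 th(1)] mp)
    fix k assume "k \<in> {..<K}"
    then have "0 < p k" "p k \<le> 1" using pp by auto
    then have "(1 - \<Theta>) * (1 - p k) \<ge> 0" using th by simp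
    then have "p k \<le> a + \<Theta> * p k" by (simp add: a_def algebra_simps)
    then show "0 < a + \<Theta> * p k" using \<open>0 < p k\<close> by linarith
  qed
  also have "\<dots> = real K * v / (a + \<Theta> * v) + a / (a + \<Theta> * v)^2 * (1 - real K * v)"
  proof -
    have "(\<Sum>k<K. a / (a + \<Theta> * v)^2 * (p k - v)) = a / (a + \<Theta> * v)^2 * (\<Sum>k<K. p k - v)"
      by (simp add: sum_distrib_left)
    also have "\<dots> = a / (a + \<Theta> * v)^2 * (1 - real K * v)" by (simp add: sum_subtractf ps)
    finally show ?thesis by (simp add: sum.distrib)
  qed
  also have "\<dots> = 1 / (a + \<Theta> * v)" using K1 by (simp add: v_def)
  finally show ?thesis by (simp add: a_def v_def)
qed

locale env =
  fixes K b :: nat and \<epsilon> :: "nat \<Rightarrow> real" and g :: "hist \<Rightarrow> nat \<Rightarrow> real"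
    and q :: "hist \<Rightarrow> nat \<Rightarrow> nat \<Rightarrow> real" and \<eta> \<delta> :: real
  assumes K1: "1 \<le> K" and eps: "\<forall>i<b. 0 < \<epsilon> i \<and> \<epsilon> i \<le> 1"
    and venv: "valid_env K b \<epsilon> g q" and eta0: "0 \<le> \<eta>" and eta1: "\<eta> \<le> 1" and dpos: "0 < \<delta>"
begin

definition "Th = (\<Prod>i<b. 1 - \<epsilon> i / real K)"
definition "mm = 1 - Th + Th * (1 / real K)"
abbreviation "w \<equiv> expn_w K b \<eta> \<delta> g q"
abbreviation "P \<equiv> expn_p K b \<eta> \<delta> g q"
abbreviation "WW h \<equiv> (\<Sum>k<K. w h k)"
definition "pp h k = obs_prob b (P h k) (\<lambda>i. q h i k)"
definition "gh r h k = est_gain r k (g h k) (pp h k)"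
definition "E1 h f = (\<Sum>a<K. \<Sum>c\<in>Ls K b. (P h a * (\<Prod>i<b. q h i (c ! i))) * f a c)"

lemma g01: "k < K \<Longrightarrow> 0 \<le> g h k \<and> g h k \<le> 1"
  using venv by (simp add: valid_env_def)

lemma q_ge: "i < b \<Longrightarrow> k < K \<Longrightarrow> \<epsilon> i / real K \<le> q h i k"
  using venv by (simp add: valid_env_def)

lemma q_sum: "i < b \<Longrightarrow> (\<Sum>k<K. q h i k) = 1"
  using venv by (simp add: valid_env_def)

lemma q_nonneg: "i < b \<Longrightarrow> k < K \<Longrightarrow> 0 \<le> q h i k"
proof -
  assume "i < b" "k < K"
  then have "0 < \<epsilon> i" using eps by blast
  then have "0 \<le> \<epsilon> i / real K" by simp
  then show ?thesis using q_ge[OF \<open>i<b\<close> \<open>k<K\<close>, of h] by linarith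
qed

lemma q_le1: "i < b \<Longrightarrow> k < K \<Longrightarrow> q h i k \<le> 1"
proof -
  assume ik: "i < b" "k < K"
  have "q h i k \<le> (\<Sum>k<K. q h i k)"
    by (rule member_le_sum) (use ik q_nonneg in auto)
  then show ?thesis using q_sum[OF ik(1)] by simp
qed

lemma w_rec: "w (r # h) k = w h k * exp (\<delta> * gh r h k)"
  by (simp add: gh_def pp_def expn_p_def)

lemma w_pos: "0 < w h k"
  by (induction h arbitrary: k) (simp_all add: w_rec)

lemma WW_pos: "0 < WW h"
proof -
  have "0 \<in> {..<K}" using K1 by simp
  then have "{..<K} \<noteq> {}" by blast
  then show ?thesis using w_pos by (intro sum_pos) auto
qed

lemma w_le_WW: "k < K \<Longrightarrow> w h k \<le> WW h"
  by (rule member_le_sum) (use w_pos in \<open>auto intro: less_imp_le\<close>)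

lemma P_eq: "P h k = (1 - \<eta>) * w h k / WW h + \<eta> / real K"
  by (simp add: expn_p_def expn_prob_def)

lemma P_ge: "\<eta> / real K \<le> P h k"
proof -
  have "0 \<le> (1 - \<eta>) * w h k / WW h"
    using eta1 w_pos WW_pos by (intro divide_nonneg_pos mult_nonneg_nonneg) (auto intro: less_imp_le)
  then show ?thesis by (simp add: P_eq)
qed

lemma P_pos: "0 < P h k"
proof (cases "\<eta> = 1")
  case True then show ?thesis unfolding P_eq using K1 by simp
next
  case False
  then have "0 < (1 - \<eta>) * w h k / WW h" using eta1 w_pos WW_pos by simp
  moreover have "0 \<le> \<eta> / real K" using eta0 by simp
  ultimately show ?thesis by (simp add: P_eq)
qed

lemma P_sum: "(\<Sum>k<K. P h k) = 1"
proof -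
  have "(\<Sum>k<K. P h k) = (1 - \<eta>) / WW h * WW h + real K * (\<eta> / real K)"
    by (simp add: P_eq sum.distrib sum_distrib_left[symmetric] sum_divide_distrib[symmetric])
  also have "\<dots> = 1" using WW_pos[of h] K1 by (simp add: less_imp_neq[symmetric])
  finally show ?thesis .
qed

lemma P_le1: "k < K \<Longrightarrow> P h k \<le> 1"
proof -
  assume k: "k < K"
  have "P h k \<le> (\<Sum>k<K. P h k)"
    by (rule member_le_sum) (use k P_pos in \<open>auto intro: less_imp_le\<close>)
  then show ?thesis by (simp add: P_sum)
qed

lemma good_P: "good K b P q"
  unfolding good_def using P_pos P_sum q_nonneg q_sum by (auto intro: less_imp_le)

lemma Th_bounds: "0 \<le> Th" "Th \<le> 1"
proof -
  have f: "\<forall>i\<in>{..<b}. 0 \<le> 1 - \<epsilon> i / real K \<and> 1 - \<epsilon> i / real K \<le> 1"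
    using eps K1 by auto
  show "0 \<le> Th" unfolding Th_def using f by (intro prod_nonneg) auto
  show "Th \<le> 1" unfolding Th_def using f by (intro prod_le_1) auto
qed

lemma mm_pos: "0 < mm"
proof -
  have "1 - Th + Th * (1 / real K) \<ge> 1 / real K"
  proof -
    have "(1 - Th) * (1 - 1 / real K) \<ge> 0" using Th_bounds K1 by (intro mult_nonneg_nonneg) auto
    then show ?thesis by (simp add: algebra_simps)
  qed
  moreover have "1 / real K > 0" using K1 by simp
  ultimately show ?thesis unfolding mm_def by linarith
qed

lemma pp_ge: "k < K \<Longrightarrow> 1 - Th + Th * P h k \<le> pp h k"
proof -
  assume k: "k < K"
  have "(\<Prod>i<b. 1 - q h i k) \<le> Th" unfolding Th_def
  proof (intro prod_mono conjI)
    fix i assume "i \<in> {..<b}"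
    then show "0 \<le> 1 - q h i k" "1 - q h i k \<le> 1 - \<epsilon> i / real K" using q_le1 q_ge k by auto
  qed
  moreover have "0 \<le> 1 - P h k" using P_le1[OF k] by simp
  ultimately have "(1 - P h k) * (\<Prod>i<b. 1 - q h i k) \<le> (1 - P h k) * Th"
    by (rule mult_left_mono)
  then show ?thesis by (simp add: pp_def obs_prob_def algebra_simps)
qed

lemma pp_ge_P: "k < K \<Longrightarrow> P h k \<le> pp h k"
proof -
  assume k: "k < K"
  have "(1 - Th) * (1 - P h k) \<ge> 0" using Th_bounds P_le1[OF k] by simp
  then show ?thesis using pp_ge[OF k, of h] by (simp add: algebra_simps)
qed

lemma pp_pos: "k < K \<Longrightarrow> 0 < pp h k"
  using pp_ge_P[of k h] P_pos[of h k] by linarith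

lemma pp_ge_eta: "k < K \<Longrightarrow> \<eta> * mm \<le> pp h k"
proof -
  assume k: "k < K"
  have "\<eta> * mm = \<eta> * (1 - Th) + Th * (\<eta> / real K)" by (simp add: mm_def algebra_simps)
  also have "\<dots> \<le> (1 - Th) + Th * P h k"
    using Th_bounds eta0 eta1 P_ge[of h k] mult_left_le_one_le[of "1-Th" \<eta>] by (intro add_mono mult_left_mono) auto
  finally show ?thesis using pp_ge[OF k, of h] by linarith
qed


lemma HE_one_E1: "hist_expect K b P q 1 F h = E1 h (\<lambda>a c. F ((a,c) # h))"
  by (simp only: HE_one E1_def)

lemma E1_cong: "(\<And>a c. a < K \<Longrightarrow> c \<in> Ls K b \<Longrightarrow> f a c = f' a c) \<Longrightarrow> E1 h f = E1 h f'"
  unfolding E1_def by (intro sum.cong refl) auto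

lemma E1_add: "E1 h (\<lambda>a c. f a c + f' a c) = E1 h f + E1 h f'"
  by (simp add: E1_def distrib_left sum.distrib)

lemma E1_diff: "E1 h (\<lambda>a c. f a c - f' a c) = E1 h f - E1 h f'"
  by (simp add: E1_def right_diff_distrib sum_subtractf)

lemma E1_scale: "E1 h (\<lambda>a c. x * f a c) = x * E1 h f"
  by (simp add: E1_def sum_distrib_left ac_simps)

lemma E1_const: "E1 h (\<lambda>a c. x) = x"
  using weight_sum[OF good_P, of h] by (simp add: E1_def sum_distrib_right[symmetric])

lemma E1_sum: "E1 h (\<lambda>a c. \<Sum>k\<in>A. f k a c) = (\<Sum>k\<in>A. E1 h (f k))"
proof -
  have "E1 h (\<lambda>a c. \<Sum>k\<in>A. f k a c) = (\<Sum>a<K. \<Sum>c\<in>Ls K b. \<Sum>k\<in>A. (P h a * (\<Prod>i<b. q h i (c ! i))) * f k a c)"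
    by (simp add: E1_def sum_distrib_left)
  also have "\<dots> = (\<Sum>a<K. \<Sum>k\<in>A. \<Sum>c\<in>Ls K b. (P h a * (\<Prod>i<b. q h i (c ! i))) * f k a c)"
    by (rule sum.cong[OF refl], rule sum.swap)
  also have "\<dots> = (\<Sum>k\<in>A. \<Sum>a<K. \<Sum>c\<in>Ls K b. (P h a * (\<Prod>i<b. q h i (c ! i))) * f k a c)"
    by (rule sum.swap)
  finally show ?thesis by (simp add: E1_def)
qed

lemma Qsum: "(\<Sum>c\<in>Ls K b. \<Prod>i<b. q h i (c!i)) = 1"
  by (simp add: sum_prod_Ls q_sum)

lemma E1_a: "E1 h (\<lambda>a c. f a) = (\<Sum>a<K. P h a * f a)"
proof -
  have "E1 h (\<lambda>a c. f a) = (\<Sum>a<K. P h a * f a * (\<Sum>c\<in>Ls K b. \<Prod>i<b. q h i (c!i)))"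
    by (simp add: E1_def sum_distrib_left ac_simps)
  then show ?thesis by (simp add: Qsum)
qed

lemma E1_ind: "k < K \<Longrightarrow> E1 h (\<lambda>a c. if k = a \<or> k \<in> set c then 1 else 0) = pp h k"
proof -
  assume k: "k < K"
  have "E1 h (\<lambda>a c. if k = a \<or> k \<in> set c then 1 else 0)
      = E1 h (\<lambda>a c. 1 - (if a = k then 0 else 1) * (\<Prod>i<b. if c!i = k then 0 else 1))"
  proof (rule E1_cong)
    fix a c assume "c \<in> Ls K b"
    then have "length c = b" by (simp add: Ls_def)
    then show "(if k = a \<or> k \<in> set c then 1 else 0) = 1 - (if a = k then 0 else 1) * (\<Prod>i<b. if c!i = k then 0 else (1::real))"
      using prod_ind_list[of c k] by auto
  qed
  also have "\<dots> = 1 - E1 h (\<lambda>a c. (if a = k then 0 else 1) * (\<Prod>i<b. if c!i = k then 0 else 1))"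
    by (simp add: E1_diff E1_const)
  also have "E1 h (\<lambda>a c. (if a = k then 0 else 1) * (\<Prod>i<b. if c!i = k then 0 else 1))
     = (\<Sum>a<K. P h a * (if a = k then 0 else 1)) * (\<Sum>c\<in>Ls K b. \<Prod>i<b. q h i (c!i) * (if c!i = k then 0 else 1))"
    by (simp add: E1_def sum_product prod.distrib ac_simps)
  also have "(\<Sum>c\<in>Ls K b. \<Prod>i<b. q h i (c!i) * (if c!i = k then 0 else 1)) = (\<Prod>i<b. \<Sum>x<K. q h i x * (if x = k then 0 else (1::real)))"
    by (rule sum_prod_Ls)
  also have "\<dots> = (\<Prod>i<b. 1 - q h i k)"
    using k by (simp add: sum_ind_except q_sum)
  also have "(\<Sum>a<K. P h a * (if a = k then 0 else 1)) = 1 - P h k"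
    using k by (simp add: sum_ind_except P_sum)
  finally show ?thesis by (simp add: pp_def obs_prob_def)
qed

lemma gh_eq: "gh r h k = g h k / pp h k * (if k = fst r \<or> k \<in> set (snd r) then 1 else 0)"
  by (simp add: gh_def est_gain_def)

lemma E1_gh: "k < K \<Longrightarrow> E1 h (\<lambda>a c. gh (a,c) h k) = g h k"
proof -
  assume k: "k < K"
  have "E1 h (\<lambda>a c. gh (a,c) h k) = g h k / pp h k * E1 h (\<lambda>a c. if k = a \<or> k \<in> set c then 1 else 0)"
    unfolding gh_eq fst_conv snd_conv by (rule E1_scale)
  then show ?thesis using E1_ind[OF k] pp_pos[OF k, of h] by simp
qed

lemma E1_gh2: "k < K \<Longrightarrow> E1 h (\<lambda>a c. (gh (a,c) h k)^2) = (g h k)^2 / pp h k"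
proof -
  assume k: "k < K"
  have "E1 h (\<lambda>a c. (gh (a,c) h k)^2) = (g h k / pp h k)^2 * E1 h (\<lambda>a c. if k = a \<or> k \<in> set c then 1 else 0)"
    by (subst E1_scale[symmetric], rule E1_cong) (simp add: gh_eq power_mult_distrib)
  then show ?thesis using E1_ind[OF k] pp_pos[OF k, of h] by (simp add: power2_eq_square)
qed

lemma gh_nonneg: "k < K \<Longrightarrow> 0 \<le> gh r h k"
  using g01 pp_pos by (simp add: gh_eq less_imp_le)

lemma dgh_le1:
  assumes d: "\<delta> \<le> \<eta> * mm" and k: "k < K"
  shows "\<delta> * gh r h k \<le> 1"
proof -
  have pp: "0 < pp h k" using pp_pos[OF k] .
  have "gh r h k \<le> g h k / pp h k" using g01[OF k] pp by (simp add: gh_eq less_imp_le)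
  also have "\<dots> \<le> 1 / pp h k" using g01[OF k] pp by (simp add: divide_right_mono less_imp_le)
  finally have "\<delta> * gh r h k \<le> \<delta> * (1 / pp h k)" by (rule mult_left_mono) (use dpos in auto)
  also have "\<dots> \<le> 1" using d pp_ge_eta[OF k, of h] pp by simp
  finally show ?thesis .
qed

lemma step_ineq:
  assumes d: "\<delta> \<le> \<eta> * mm"
  shows "(1 - \<eta>) * (ln (WW (r # h)) - ln (WW h))
     \<le> \<delta> * (\<Sum>k<K. P h k * gh r h k) + \<delta>^2 * (\<Sum>k<K. P h k * (gh r h k)^2)"
proof -
  define x where "x k = \<delta> * gh r h k" for k
  define y where "y = (\<Sum>k<K. w h k / WW h * (x k + (x k)^2))"
  have Wp: "0 < WW h" by (rule WW_pos)
  have x0: "k < K \<Longrightarrow> 0 \<le> x k" for k using gh_nonneg dpos by (simp add: x_def)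
  have x1: "k < K \<Longrightarrow> x k \<le> 1" for k using dgh_le1[OF d] by (simp add: x_def)
  have y0: "0 \<le> y" unfolding y_def using x0 w_pos Wp
    by (intro sum_nonneg mult_nonneg_nonneg divide_nonneg_pos add_nonneg_nonneg) (auto intro: less_imp_le)
  have "WW (r # h) = (\<Sum>k<K. w h k * exp (x k))" by (simp only: w_rec x_def)
  also have "\<dots> \<le> (\<Sum>k<K. w h k * (1 + x k + (x k)^2))"
    using exp_bound x0 x1 w_pos by (intro sum_mono mult_left_mono) (auto intro: less_imp_le)
  also have "\<dots> = WW h * (1 + y)"
  proof -
    have "WW h * y = (\<Sum>k<K. w h k * (x k + (x k)^2))"
      unfolding y_def sum_distrib_left by (rule sum.cong) (use Wp in auto)
    moreover have "(\<Sum>k<K. w h k * (1 + x k + (x k)^2)) = WW h + (\<Sum>k<K. w h k * (x k + (x k)^2))"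
      by (simp add: sum.distrib distrib_left add.assoc)
    ultimately show ?thesis by (simp add: distrib_left)
  qed
  finally have "WW (r # h) / WW h \<le> 1 + y" using Wp by (simp add: divide_simps mult.commute)
  moreover have "0 < WW (r # h)" by (rule WW_pos)
  ultimately have "ln (WW (r # h) / WW h) \<le> ln (1 + y)" using Wp y0 by simp
  also have "\<dots> \<le> y" using y0 by (rule ln_add_one_self_le_self)
  finally have lny: "ln (WW (r # h)) - ln (WW h) \<le> y" using Wp \<open>0 < WW (r # h)\<close> by (simp add: ln_div)
  have "(1 - \<eta>) * y = (\<Sum>k<K. ((1 - \<eta>) * w h k / WW h) * (x k + (x k)^2))"
    by (simp add: y_def sum_distrib_left ac_simps)
  also have "\<dots> \<le> (\<Sum>k<K. P h k * (x k + (x k)^2))"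
  proof (intro sum_mono mult_right_mono)
    fix k assume k: "k \<in> {..<K}"
    show "(1 - \<eta>) * w h k / WW h \<le> P h k" using eta0 K1 by (simp add: P_eq)
    show "0 \<le> x k + (x k)^2" using x0 k by simp
  qed
  also have "\<dots> = \<delta> * (\<Sum>k<K. P h k * gh r h k) + \<delta>^2 * (\<Sum>k<K. P h k * (gh r h k)^2)"
    by (simp add: x_def sum_distrib_left sum.distrib power_mult_distrib algebra_simps)
  finally have "(1 - \<eta>) * y \<le> \<dots>" .
  moreover have "(1 - \<eta>) * (ln (WW (r # h)) - ln (WW h)) \<le> (1 - \<eta>) * y"
    using lny eta1 by (simp add: mult_left_mono)
  ultimately show ?thesis by linarith
qed


primrec XX :: "nat \<Rightarrow> hist \<Rightarrow> real" where
  "XX j [] = 0"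
| "XX j (r # h) = XX j h + (1 - \<eta>) * \<delta> * (g h j - gh r h j)
     - \<delta> * (g h (fst r) - (\<Sum>k<K. P h k * gh r h k)) + \<delta>^2 * (\<Sum>k<K. P h k * (gh r h k)^2)"

definition "QQ j h = (1 - \<eta>) * \<delta> * arm_gain g j h - \<delta> * agent_gain g h - XX j h"

lemma sumP_pp: "(\<Sum>k<K. P h k * (g h k)^2 / pp h k) \<le> 1 / mm"
proof -
  have "(\<Sum>k<K. P h k * (g h k)^2 / pp h k) \<le> (\<Sum>k<K. P h k / (1 - Th + Th * P h k))"
  proof (rule sum_mono)
    fix k assume "k \<in> {..<K}"
    then have k: "k < K" by simp
    have Pp: "0 < P h k" by (rule P_pos)
    have d: "P h k \<le> 1 - Th + Th * P h k"
    proof -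
      have "(1 - Th) * (1 - P h k) \<ge> 0" using Th_bounds P_le1[OF k] by simp
      then show ?thesis by (simp add: algebra_simps)
    qed
    have "P h k * (g h k)^2 / pp h k \<le> P h k / pp h k"
    proof -
      have "(g h k)^2 \<le> 1" using g01[OF k] by (simp add: power_le_one)
      then have "P h k * (g h k)^2 \<le> P h k" using Pp by (simp add: mult_left_le)
      then show ?thesis using pp_pos[OF k, of h] by (simp add: divide_right_mono)
    qed
    also have "\<dots> \<le> P h k / (1 - Th + Th * P h k)"
      using pp_ge[OF k, of h] d Pp by (intro divide_left_mono) auto
    finally show "P h k * (g h k)^2 / pp h k \<le> P h k / (1 - Th + Th * P h k)" .
  qed
  also have "\<dots> \<le> 1 / mm" unfolding mm_def
    by (rule jensen_sum[OF K1 Th_bounds]) (use P_pos P_le1 P_sum in auto)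
  finally show ?thesis .
qed

lemma XX_incr:
  assumes j: "j < K"
  shows "hist_expect K b P q 1 (XX j) h \<le> XX j h + \<delta>^2 / mm"
proof -
  have e1: "E1 h (\<lambda>a c. \<Sum>k<K. P h k * gh (a,c) h k) = (\<Sum>k<K. P h k * g h k)"
    by (simp add: E1_sum E1_scale E1_gh)
  have e2: "E1 h (\<lambda>a c. \<Sum>k<K. P h k * (gh (a,c) h k)^2) = (\<Sum>k<K. P h k * (g h k)^2 / pp h k)"
    by (simp add: E1_sum E1_scale E1_gh2)
  have "hist_expect K b P q 1 (XX j) h =
     E1 h (\<lambda>a c. XX j h + (1 - \<eta>) * \<delta> * (g h j - gh (a,c) h j)
     - \<delta> * (g h a - (\<Sum>k<K. P h k * gh (a,c) h k)) + \<delta>^2 * (\<Sum>k<K. P h k * (gh (a,c) h k)^2))"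
    unfolding HE_one_E1 by simp
  also have "\<dots> = XX j h + (1 - \<eta>) * \<delta> * (g h j - g h j)
     - \<delta> * ((\<Sum>a<K. P h a * g h a) - (\<Sum>k<K. P h k * g h k)) + \<delta>^2 * (\<Sum>k<K. P h k * (g h k)^2 / pp h k)"
    by (simp only: E1_add E1_diff E1_scale E1_const E1_gh[OF j] E1_a e1 e2)
  also have "\<dots> = XX j h + \<delta>^2 * (\<Sum>k<K. P h k * (g h k)^2 / pp h k)" by simp
  also have "\<dots> \<le> XX j h + \<delta>^2 * (1 / mm)"
    using sumP_pp by (intro add_left_mono mult_left_mono) auto
  finally show ?thesis by simp
qed

lemma WW_Nil: "WW [] = real K" by simp

lemma QQ_bound:
  assumes d: "\<delta> \<le> \<eta> * mm" and j: "j < K"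
  shows "QQ j h \<le> (1 - \<eta>) * ln (real K) - (1 - \<eta>) * (ln (WW h) - ln (w h j))"
proof (induction h)
  case Nil
  then show ?case by (simp add: QQ_def)
next
  case (Cons r h)
  have qq: "QQ j (r # h) = QQ j h + (1 - \<eta>) * \<delta> * gh r h j - \<delta> * (\<Sum>k<K. P h k * gh r h k)
      - \<delta>^2 * (\<Sum>k<K. P h k * (gh r h k)^2)"
    by (simp add: QQ_def algebra_simps)
  have lw: "ln (w (r # h) j) = ln (w h j) + \<delta> * gh r h j"
    unfolding w_rec using w_pos[of h j] by (simp add: ln_mult)
  show ?case using Cons.IH step_ineq[OF d, of r h] qq lw by (simp add: algebra_simps)
qed

lemma QQ_le: "\<delta> \<le> \<eta> * mm \<Longrightarrow> j < K \<Longrightarrow> QQ j h \<le> (1 - \<eta>) * ln (real K)"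
proof -
  assume d: "\<delta> \<le> \<eta> * mm" and j: "j < K"
  have "ln (w h j) \<le> ln (WW h)" using w_le_WW[OF j, of h] w_pos[of h j] by simp
  then have "0 \<le> (1 - \<eta>) * (ln (WW h) - ln (w h j))" using eta1 by simp
  then show ?thesis using QQ_bound[OF d j, of h] by linarith
qed

abbreviation "EE T f \<equiv> hist_expect K b P q T f []"

lemma main_ineq:
  assumes d: "\<delta> \<le> \<eta> * mm" and j: "j < K"
  shows "(1 - \<eta>) * \<delta> * EE T (arm_gain g j) - \<delta> * EE T (agent_gain g)
     \<le> (1 - \<eta>) * ln (real K) + real T * (\<delta>^2 / mm)"
proof -
  have feq: "(\<lambda>h. (1 - \<eta>) * \<delta> * arm_gain g j h + (- \<delta>) * agent_gain g h) = (\<lambda>h. QQ j h + XX j h)"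
    by (rule ext) (simp add: QQ_def)
  have "(1 - \<eta>) * \<delta> * EE T (arm_gain g j) - \<delta> * EE T (agent_gain g)
      = EE T (\<lambda>h. (1 - \<eta>) * \<delta> * arm_gain g j h + (- \<delta>) * agent_gain g h)"
    by (simp only: HE_add HE_scale)
  also have "\<dots> = EE T (QQ j) + EE T (XX j)" by (subst feq) (rule HE_add)
  finally have eq: "(1 - \<eta>) * \<delta> * EE T (arm_gain g j) - \<delta> * EE T (agent_gain g) = EE T (QQ j) + EE T (XX j)" .
  have "EE T (QQ j) \<le> EE T (\<lambda>h. (1 - \<eta>) * ln (real K))"
    by (rule HE_mono[OF good_P QQ_le[OF d j]])
  also have "\<dots> = (1 - \<eta>) * ln (real K)" by (rule HE_const[OF good_P])
  finally have a: "EE T (QQ j) \<le> (1 - \<eta>) * ln (real K)" .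
  have b: "EE T (XX j) \<le> XX j [] + real T * (\<delta>^2 / mm)"
    by (rule HE_incr[OF good_P XX_incr[OF j]])
  have "XX j [] = 0" by simp
  then show ?thesis using eq a b by linarith
qed

lemma arm_le: "j < K \<Longrightarrow> EE T (arm_gain g j) \<le> real T"
proof -
  assume j: "j < K"
  have "EE T (arm_gain g j) \<le> arm_gain g j [] + real T * 1"
  proof (rule HE_incr[OF good_P])
    fix h
    have "hist_expect K b P q 1 (arm_gain g j) h = E1 h (\<lambda>a c. arm_gain g j h + g h j)"
      unfolding HE_one_E1 by simp
    also have "\<dots> = arm_gain g j h + g h j" by (simp only: E1_add E1_const)
    finally show "hist_expect K b P q 1 (arm_gain g j) h \<le> arm_gain g j h + 1" using g01[OF j] by simp
  qed
  then show ?thesis by simp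
qed

lemma agent_ge: "0 \<le> EE T (agent_gain g)"
proof -
  have "EE T (\<lambda>h. (-1) * agent_gain g h) \<le> (-1) * agent_gain g [] + real T * 0"
  proof (rule HE_incr[OF good_P])
    fix h
    have "hist_expect K b P q 1 (\<lambda>h. (-1) * agent_gain g h) h = E1 h (\<lambda>a c. (-1) * (agent_gain g h + g h a))"
      unfolding HE_one_E1 by simp
    also have "\<dots> = (-1) * (agent_gain g h + (\<Sum>a<K. P h a * g h a))" by (simp only: E1_scale E1_add E1_const E1_a)
    also have "\<dots> \<le> (-1) * agent_gain g h + 0"
    proof -
      have "0 \<le> (\<Sum>a<K. P h a * g h a)" using P_pos g01 by (intro sum_nonneg) (simp add: less_imp_le)
      then show ?thesis by simp
    qed
    finally show "hist_expect K b P q 1 (\<lambda>h. (-1) * agent_gain g h) h \<le> (-1) * agent_gain g h + 0" .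
  qed
  then show ?thesis unfolding HE_scale by simp
qed

lemma K1_case:
  assumes "K = 1"
  shows "EE T (arm_gain g 0) - EE T (agent_gain g) \<le> 0"
proof -
  have P1: "P h 0 = 1" for h using P_sum[of h] assms by simp
  have "EE T (\<lambda>h. arm_gain g 0 h + (-1) * agent_gain g h) \<le> (arm_gain g 0 [] + (-1) * agent_gain g []) + real T * 0"
  proof (rule HE_incr[OF good_P])
    fix h
    have "hist_expect K b P q 1 (\<lambda>h. arm_gain g 0 h + (-1) * agent_gain g h) h
        = E1 h (\<lambda>a c. (arm_gain g 0 h + g h 0) + (-1) * (agent_gain g h + g h a))"
      unfolding HE_one_E1 by simp
    also have "\<dots> = (arm_gain g 0 h + g h 0) + (-1) * (agent_gain g h + (\<Sum>a<K. P h a * g h a))"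
      by (simp only: E1_scale E1_add E1_const E1_a)
    also have "\<dots> = arm_gain g 0 h + (-1) * agent_gain g h + 0" using assms P1 by simp
    finally show "hist_expect K b P q 1 (\<lambda>h. arm_gain g 0 h + (-1) * agent_gain g h) h \<le> arm_gain g 0 h + (-1) * agent_gain g h + 0"
      by simp
  qed
  then show ?thesis unfolding HE_add HE_scale by simp
qed

end


lemma regret_max_le:
  fixes G :: "nat \<Rightarrow> real"
  assumes "1 \<le> K" "\<And>j. j < K \<Longrightarrow> G j - A \<le> x"
  shows "(MAX j\<in>{..<K}. G j) - A \<le> x"
proof -
  have "0 \<in> {..<K}" using assms(1) by simp
  then have ne: "G ` {..<K} \<noteq> {}" by blast
  have "(MAX j\<in>{..<K}. G j) \<le> x + A"
    using assms(2) by (subst Max_le_iff[OF _ ne]) (auto simp: algebra_simps)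
  then show ?thesis by simp
qed

definition etaf :: "nat \<Rightarrow> nat \<Rightarrow> real \<Rightarrow> real" where
  "etaf K T \<Theta> = (if 2 \<le> K \<and> 1 \<le> T
     then min 1 (sqrt ((1 / (1 - (1 - 1 / real K) * \<Theta>)) * ln (real K) / (2 * real T))) else 0)"

definition deltaf :: "nat \<Rightarrow> nat \<Rightarrow> real \<Rightarrow> real" where
  "deltaf K T \<Theta> = (if 2 \<le> K \<and> 1 \<le> T then etaf K T \<Theta> * (1 - (1 - 1 / real K) * \<Theta>) else 1)"

lemma Theta_bounds:
  assumes K1: "K \<ge> 1" and eps: "\<forall>i<b. 0 < \<epsilon> i \<and> \<epsilon> i \<le> 1"
  shows "0 \<le> (\<Prod>i<b. 1 - \<epsilon> i / real K)" "(\<Prod>i<b. 1 - \<epsilon> i / real K) \<le> 1"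
proof -
  have f: "\<forall>i\<in>{..<b}. 0 \<le> 1 - \<epsilon> i / real K \<and> 1 - \<epsilon> i / real K \<le> 1"
    using eps K1 by auto
  show "0 \<le> (\<Prod>i<b. 1 - \<epsilon> i / real K)" using f by (intro prod_nonneg) auto
  show "(\<Prod>i<b. 1 - \<epsilon> i / real K) \<le> 1" using f by (intro prod_le_1) auto
qed

lemma m0_bounds:
  fixes \<Theta> :: real
  assumes K1: "K \<ge> 1" and Th0: "0 \<le> \<Theta>" and Th1: "\<Theta> \<le> 1"
  shows "0 < 1 - (1 - 1 / real K) * \<Theta>"
proof -
  have "(1 - \<Theta>) * (1 - 1 / real K) \<ge> 0" using Th1 K1 by (intro mult_nonneg_nonneg) auto
  moreover have "0 < 1 / real K" using K1 by simp
  ultimately have "0 < (1 - \<Theta>) * (1 - 1 / real K) + 1 / real K" by (rule add_nonneg_pos)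
  moreover have "1 - (1 - 1 / real K) * \<Theta> = (1 - \<Theta>) * (1 - 1 / real K) + 1 / real K"
    by (simp add: algebra_simps add_divide_distrib[symmetric])
  ultimately show ?thesis by simp
qed

lemma params:
  fixes \<Theta> :: real
  assumes K1: "K \<ge> 1" and Th0: "0 \<le> \<Theta>" and Th1: "\<Theta> \<le> 1"
  shows "0 \<le> etaf K T \<Theta> \<and> etaf K T \<Theta> \<le> 1 \<and> 0 < deltaf K T \<Theta>"
proof (cases "2 \<le> K \<and> 1 \<le> T")
  case True
  have m: "0 < 1 - (1 - 1 / real K) * \<Theta>" by (rule m0_bounds[OF assms])
  have L: "0 < ln (real K)" using True by simp
  have T: "0 < real T" using True by simp
  have "0 < (1 / (1 - (1 - 1 / real K) * \<Theta>)) * ln (real K) / (2 * real T)"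
    using m L T by simp
  then have "0 < etaf K T \<Theta>" using True by (simp add: etaf_def)
  moreover have "etaf K T \<Theta> \<le> 1" by (simp add: etaf_def)
  ultimately show ?thesis using True m by (simp add: deltaf_def)
next
  case False
  then show ?thesis by (simp only: etaf_def deltaf_def if_not_P[OF False]) simp
qed

lemma core:
  fixes K T b :: nat and \<epsilon> :: "nat \<Rightarrow> real" and g q
  assumes K1: "K \<ge> 1" and eps: "\<forall>i<b. 0 < \<epsilon> i \<and> \<epsilon> i \<le> 1" and venv: "valid_env K b \<epsilon> g q"
  defines "\<Theta> \<equiv> (\<Prod>i<b. 1 - \<epsilon> i / real K)"
  defines "\<beta> \<equiv> 1 / (1 - (1 - 1 / real K) * \<Theta>) + 1"
  defines "\<eta> \<equiv> etaf K T \<Theta>" and "\<delta> \<equiv> deltaf K T \<Theta>"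
  shows "expn_regret K b \<eta> \<delta> g q T \<le> 3 * sqrt (\<beta> * real T * ln (real K))"
proof -
  have Th0: "0 \<le> \<Theta>" and Th1: "\<Theta> \<le> 1" unfolding \<Theta>_def using Theta_bounds[OF K1 eps] by auto
  define m0 where "m0 = 1 - (1 - 1 / real K) * \<Theta>"
  have m0p: "0 < m0" unfolding m0_def by (rule m0_bounds[OF K1 Th0 Th1])
  define B where "B = 1 / m0"
  have Bp: "0 < B" using m0p by (simp add: B_def)
  have \<beta>B: "\<beta> = B + 1" by (simp add: \<beta>_def B_def m0_def)
  have lnK0: "0 \<le> ln (real K)" using K1 by simp
  have rhs0: "0 \<le> 3 * sqrt (\<beta> * real T * ln (real K))" using Bp lnK0 by (simp add: \<beta>B)
  have pr: "0 \<le> \<eta> \<and> \<eta> \<le> 1 \<and> 0 < \<delta>" unfolding \<eta>_def \<delta>_def by (rule params[OF K1 Th0 Th1])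
  show ?thesis
  proof (cases "2 \<le> K \<and> 1 \<le> T")
    case False
    have e0: "\<eta> = 0" and d1: "\<delta> = 1" by (simp_all only: \<eta>_def \<delta>_def etaf_def deltaf_def if_not_P[OF False])
    interpret env K b \<epsilon> g q \<eta> \<delta>
      unfolding env_def using K1 eps venv e0 d1 by auto
    have "expn_regret K b \<eta> \<delta> g q T \<le> 0"
    proof (cases "T = 0")
      case True
      then show ?thesis unfolding expn_regret_def by (intro regret_max_le[OF K1]) simp
    next
      case False
      then have K: "K = 1" using \<open>\<not> (2 \<le> K \<and> 1 \<le> T)\<close> K1 by auto
      have "EE T (arm_gain g 0) - EE T (agent_gain g) \<le> 0" by (rule K1_case[OF K])
      then show ?thesis unfolding expn_regret_def
        by (intro regret_max_le[OF K1]) (simp add: K)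
    qed
    then show ?thesis using rhs0 by linarith
  next
    case True
    define L where "L = ln (real K)"
    have Lp: "0 < L" using True by (simp add: L_def)
    define s where "s = sqrt (B * L / (2 * real T))"
    have Tp: "0 < real T" using True by simp
    have sp: "0 < s" using Bp Lp Tp by (simp add: s_def)
    have ss: "s^2 = B * L / (2 * real T)" using Bp Lp Tp by (simp add: s_def)
    have e: "\<eta> = min 1 s" using True by (simp add: \<eta>_def etaf_def s_def B_def m0_def L_def)
    have d: "\<delta> = \<eta> * m0" using True by (simp add: \<eta>_def \<delta>_def deltaf_def m0_def)
    have ep: "0 < \<eta>" using e sp by simp
    have e1: "\<eta> \<le> 1" using e by simp
    have dp: "0 < \<delta>" using pr by simp
    interpret env K b \<epsilon> g q \<eta> \<delta>
      unfolding env_def using K1 eps venv ep e1 dp by auto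
    have mm_eq: "mm = m0" by (simp add: mm_def Th_def \<Theta>_def m0_def algebra_simps)
    have "expn_regret K b \<eta> \<delta> g q T \<le> 3 * sqrt (\<beta> * real T * L)"
      unfolding expn_regret_def
    proof (rule regret_max_le[OF K1])
      fix j assume j: "j < K"
      define Gj where "Gj = EE T (arm_gain g j)"
      define GA where "GA = EE T (agent_gain g)"
      have GjT: "Gj \<le> real T" using arm_le[OF j] by (simp add: Gj_def)
      have GA0: "0 \<le> GA" using agent_ge by (simp add: GA_def)
      show "Gj - GA \<le> 3 * sqrt (\<beta> * real T * L)"
      proof (cases "s \<le> 1")
        case False
        then have "1 < s^2" using one_less_power[of s 2] by simp
        then have "1 < B * L / (2 * real T)" using ss by simp
        then have BL: "2 * real T < B * L" using Tp by (simp add: field_simps)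
        have "real T * (2 * real T) \<le> real T * (B * L)" using BL Tp by simp
        moreover have "\<beta> * real T * L = real T * (B * L) + real T * L" by (simp add: \<beta>B algebra_simps)
        moreover have "0 \<le> real T * L" using Tp Lp by simp
        moreover have "(real T)^2 = real T * real T" by (simp add: power2_eq_square)
        moreover have "0 \<le> real T * real T" by simp
        ultimately have "(real T)^2 \<le> \<beta> * real T * L" by linarith
        then have "real T \<le> sqrt (\<beta> * real T * L)" by (rule real_le_rsqrt)
        moreover have "0 \<le> sqrt (\<beta> * real T * L)" using Bp Lp by (simp add: \<beta>B)
        ultimately show ?thesis using GjT GA0 by linarith
      next
        case True
        have es: "\<eta> = s" using e True by simp
        have mi: "(1 - \<eta>) * \<delta> * Gj - \<delta> * GA \<le> (1 - \<eta>) * L + real T * (\<delta>^2 / m0)"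
          using main_ineq[of j T] d j mm_eq by (simp add: Gj_def GA_def L_def)
        have dm: "\<delta>^2 / m0 = \<delta> * \<eta>" using d m0p by (simp add: power2_eq_square)
        have "\<delta> * ((1 - \<eta>) * Gj - GA) \<le> \<delta> * ((1 - \<eta>) * L / \<delta> + real T * \<eta>)"
        proof -
          have "\<delta> * ((1 - \<eta>) * Gj - GA) = (1 - \<eta>) * \<delta> * Gj - \<delta> * GA" by (simp add: algebra_simps)
          moreover have "\<delta> * ((1 - \<eta>) * L / \<delta> + real T * \<eta>) = (1 - \<eta>) * L + real T * (\<delta>^2 / m0)"
          proof -
            have "\<delta> * ((1 - \<eta>) * L / \<delta> + real T * \<eta>) = \<delta> * ((1 - \<eta>) * L / \<delta>) + real T * (\<delta> * \<eta>)"
              by (simp add: algebra_simps)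
            moreover have "\<delta> * ((1 - \<eta>) * L / \<delta>) = (1 - \<eta>) * L" using dp by simp
            ultimately show ?thesis by (simp add: dm)
          qed
          ultimately show ?thesis using mi by simp
        qed
        then have a1: "(1 - \<eta>) * Gj - GA \<le> (1 - \<eta>) * L / \<delta> + real T * \<eta>" using dp by simp
        have a2: "(1 - \<eta>) * L / \<delta> \<le> L / \<delta>"
          using e1 ep Lp dp by (intro divide_right_mono) (auto simp: mult_le_cancel_right1)
        have a3: "L / \<delta> = 2 * real T * s"
        proof -
          have "L / \<delta> = B * L / s" using d es m0p by (simp add: B_def)
          also have "B * L = 2 * real T * s^2" using ss Tp by simp
          finally show ?thesis using sp by (simp add: power2_eq_square)
        qed
        have a4: "\<eta> * Gj \<le> \<eta> * real T" using GjT ep by simp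
        have "Gj - GA \<le> 4 * s * real T"
        proof -
          have "Gj - GA = ((1 - \<eta>) * Gj - GA) + \<eta> * Gj" by (simp add: algebra_simps)
          also have "\<dots> \<le> 2 * real T * s + real T * \<eta> + \<eta> * real T" using a1 a2 a3 a4 by linarith
          also have "\<dots> = 4 * s * real T" using es by (simp add: algebra_simps)
          finally show ?thesis .
        qed
        also have "4 * s * real T \<le> 3 * sqrt (\<beta> * real T * L)"
        proof (rule power2_le_imp_le)
          have "(4 * s * real T)^2 = 16 * s^2 * (real T)^2" by (simp add: power_mult_distrib)
          also have "\<dots> = 8 * B * L * real T" using ss Tp by (simp add: power2_eq_square)
          also have "\<dots> \<le> 9 * (\<beta> * real T * L)" using Bp Lp Tp by (simp add: \<beta>B algebra_simps)
          also have "\<dots> = (3 * sqrt (\<beta> * real T * L))^2" using Bp Lp Tp by (simp add: \<beta>B power_mult_distrib)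
          finally show "(4 * s * real T)^2 \<le> (3 * sqrt (\<beta> * real T * L))^2" .
          show "0 \<le> 3 * sqrt (\<beta> * real T * L)" using Bp Lp Tp by (simp add: \<beta>B)
        qed
        finally show ?thesis .
      qed
    qed
    then show ?thesis by (simp add: L_def)
  qed
qed

theorem mainTheorem3:
  shows "\<exists>C>0. \<exists>\<eta>f \<delta>f :: nat \<Rightarrow> nat \<Rightarrow> real \<Rightarrow> real.
     \<forall>K T b (\<epsilon> :: nat \<Rightarrow> real). K \<ge> 1 \<and> (\<forall>i<b. 0 < \<epsilon> i \<and> \<epsilon> i \<le> 1) \<longrightarrow>
       (let \<Theta> = (\<Prod>i<b. 1 - \<epsilon> i / real K);
            \<beta> = 1 / (1 - (1 - 1 / real K) * \<Theta>) + 1;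
            \<eta> = \<eta>f K T \<Theta>;
            \<delta> = \<delta>f K T \<Theta>
        in 0 \<le> \<eta> \<and> \<eta> \<le> 1 \<and> 0 < \<delta> \<and>
           (\<forall>g q. valid_env K b \<epsilon> g q \<longrightarrow>
              expn_regret K b \<eta> \<delta> g q T \<le> C * sqrt (\<beta> * real T * ln (real K))))"
proof -
  have main: "\<forall>K T b (\<epsilon> :: nat \<Rightarrow> real). K \<ge> 1 \<and> (\<forall>i<b. 0 < \<epsilon> i \<and> \<epsilon> i \<le> 1) \<longrightarrow>
       (let \<Theta> = (\<Prod>i<b. 1 - \<epsilon> i / real K);
            \<beta> = 1 / (1 - (1 - 1 / real K) * \<Theta>) + 1;
            \<eta> = etaf K T \<Theta>;
            \<delta> = deltaf K T \<Theta>
        in 0 \<le> \<eta> \<and> \<eta> \<le> 1 \<and> 0 < \<delta> \<and>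
           (\<forall>g q. valid_env K b \<epsilon> g q \<longrightarrow>
              expn_regret K b \<eta> \<delta> g q T \<le> 3 * sqrt (\<beta> * real T * ln (real K))))"
  proof (intro allI impI)
  fix K T b :: nat and \<epsilon> :: "nat \<Rightarrow> real"
  assume a: "K \<ge> 1 \<and> (\<forall>i<b. 0 < \<epsilon> i \<and> \<epsilon> i \<le> 1)"
  then have K1: "K \<ge> 1" and eps: "\<forall>i<b. 0 < \<epsilon> i \<and> \<epsilon> i \<le> 1" by auto
  have ed: "0 \<le> etaf K T (\<Prod>i<b. 1 - \<epsilon> i / real K) \<and> etaf K T (\<Prod>i<b. 1 - \<epsilon> i / real K) \<le> 1
      \<and> 0 < deltaf K T (\<Prod>i<b. 1 - \<epsilon> i / real K)"
    by (rule params[OF K1 Theta_bounds[OF K1 eps]])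
  have rg: "\<forall>g q. valid_env K b \<epsilon> g q \<longrightarrow>
     expn_regret K b (etaf K T (\<Prod>i<b. 1 - \<epsilon> i / real K)) (deltaf K T (\<Prod>i<b. 1 - \<epsilon> i / real K)) g q T
       \<le> 3 * sqrt ((1 / (1 - (1 - 1 / real K) * (\<Prod>i<b. 1 - \<epsilon> i / real K)) + 1) * real T * ln (real K))"
    using core[OF K1 eps] by blast
  show "let \<Theta> = (\<Prod>i<b. 1 - \<epsilon> i / real K);
            \<beta> = 1 / (1 - (1 - 1 / real K) * \<Theta>) + 1;
            \<eta> = etaf K T \<Theta>;
            \<delta> = deltaf K T \<Theta>
        in 0 \<le> \<eta> \<and> \<eta> \<le> 1 \<and> 0 < \<delta> \<and>
           (\<forall>g q. valid_env K b \<epsilon> g q \<longrightarrow>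
              expn_regret K b \<eta> \<delta> g q T \<le> 3 * sqrt (\<beta> * real T * ln (real K)))"
    unfolding Let_def using ed rg by blast
  qed
  show ?thesis
    by (rule exI[of _ 3], rule conjI, simp, rule exI[of _ etaf], rule exI[of _ deltaf], rule main)
qed

end
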